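(* Let the InGVIO state be $\chi=(\mathbf R_i^w,{}^w\mathbf p_i,{}^w\mathbf v_i,\mathbf b_g,\mathbf b_a,\mathbf R_c^i,{}^i\mathbf p_c,\mathbf R_{c_m}^w,{}^w\mathbf p_{c_m},{}^w\mathbf p_{f_j},t_\alpha,f)$ with error defined through the map $\boxplus$: $$\hat\chi\boxplus(\delta\boldsymbol\theta_i^w,\delta{}^w\mathbf p_i,\delta{}^w\mathbf v_i,\delta\mathbf b_g,\delta\mathbf b_a,\delta\boldsymbol\theta_c^i,\delta{}^i\mathbf p_c,\delta\boldsymbol\theta_{c_m}^w,\delta{}^w\mathbf p_{c_m},\delta{}^w\mathbf p_{f_j},\delta t_\alpha,\delta f)$$ $$=\big(\Gamma_0(\delta\boldsymbol\theta_i^w)\hat{\mathbf R}_i^w,\ \Gamma_0(\delta\boldsymbol\theta_i^w){}^w\hat{\mathbf p}_i+\Gamma_1(\delta\boldsymbol\theta_i^w)\delta{}^w\mathbf p_i,\ \Gamma_0(\delta\boldsymbol\theta_i^w){}^w\hat{\mathbf v}_i+\Gamma_1(\delta\boldsymbol\theta_i^w)\delta{}^w\mathbf v_i,\ \hat{\mathbf b}_g+\delta\mathbf b_g,\ \hat{\mathbf b}_a+\delta\mathbf b_a,$$ $$\Gamma_0(\delta\boldsymbol\theta_c^i)\hat{\mathbf R}_c^i,\ \Gamma_0(\delta\boldsymbol\theta_c^i){}^i\hat{\mathbf p}_c+\Gamma_1(\delta\boldsymbol\theta_c^i)\delta{}^i\mathbf p_c,\ \Gamma_0(\delta\boldsymbol\theta_{c_m}^w)\hat{\mathbf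 R}_{c_m}^w,\ \Gamma_0(\delta\boldsymbol\theta_{c_m}^w){}^w\hat{\mathbf p}_{c_m}+\Gamma_1(\delta\boldsymbol\theta_{c_m}^w)\delta{}^w\mathbf p_{c_m},$$ $$\Gamma_0(\delta\boldsymbol\theta_{c_m}^w){}^w\hat{\mathbf p}_{f_j}+\Gamma_1(\delta\boldsymbol\theta_{c_m}^w)\delta{}^w\mathbf p_{f_j},\ \hat t_\alpha+\delta t_\alpha,\ \hat f+\delta f\big),$$ (each landmark being anchored to the rotation of one cloned pose $c_m$), and let $\boxminus$ be the corresponding inverse map, $\delta\chi=\chi\boxminus\hat\chi$. Then this error $\boxminus$ is compatible with the group $H$ for each of the possible infinitesimal symmetry groups $H=\mathbb{SO}_g(2)\ltimes\operatorname{null}(\mathbf N_g)$ and $H=\operatorname{null}(\mathbf N_g)$ of the GVIO system, i.e. $\frac{\partial}{\partial h}\big((h\rhd\chi)\boxminus\chi\big)\big|_{h=\mathrm{id}_H}$ does not depend on $\chi$.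
   Context: $\Gamma$-functions: for $m\ge0$, $\Gamma_m(\boldsymbol\theta)=\sum_{n\ge0}\frac{(\boldsymbol\theta^\times)^n}{(m+n)!}$, where $\boldsymbol\theta^\times$ is the skew-symmetric matrix of $\boldsymbol\theta\in\mathbb R^3$; so $\Gamma_0=\exp(\cdot^\times)$. Components: IMU rotation, position, velocity in world frame; gyroscope/accelerometer biases; camera–IMU extrinsics $(\mathbf R_c^i,{}^i\mathbf p_c)$; cloned camera poses $(\mathbf R_{c_m}^w,{}^w\mathbf p_{c_m})$; landmark positions ${}^w\mathbf p_{f_j}$; GNSS clock bias $t_\alpha$ and clock drift $f$. ${}^w\mathbf g$ is gravity; $\mathbb{SO}_g(2)$ is the group of rotations about ${}^w\mathbf g$; $\mathbf N_g$ is the matrix with rows $(\mathbf n_j-\mathbf n_{j-1})^T\mathbf R_w^{\mathrm{ECEF}}$, $j=2,\dots,N$, with $\mathbf n_j$ the unit vector from the receiver to satellite $j$ and $\mathbf R_w^{\mathrm{ECEF}}$ a fixed rotation; $\operatorname{null}(\mathbf N_g)\subseteq\mathbb R^3$ is viewed as a group of translations. An element $(\mathbf R_S,\mathbf p_S)$ of $H\subseteq\mathbb{SO}_g(2)\ltimes\mathbb R^3\subset\mathbb{SE}(3)$ acts by $\mathbf R_i^w\mapsto\mathbf R_S^{-1}\mathbf R_i^w$, ${}^w\mathbf p_i\mapsto\mathbf R_S^{-1}({}^w\mathbf p_i-\mathbf p_S)$, ${}^w\mathbf v_i\mapsto\mathbf R_S^{-1}{}^w\mathbf v_i$, $\mathbf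 R_{c_m}^w\mapsto\mathbf R_S^{-1}\mathbf R_{c_m}^w$, ${}^w\mathbf p_{c_m}\mapsto\mathbf R_S^{-1}({}^w\mathbf p_{c_m}-\mathbf p_S)$, ${}^w\mathbf p_{f_j}\mapsto\mathbf R_S^{-1}({}^w\mathbf p_{f_j}-\mathbf p_S)$, leaving biases, extrinsics and clock states unchanged. Definition: an error $\boxminus$ is compatible with a group $H$ acting on the state if $\frac{\partial}{\partial h}((h\rhd\chi)\boxminus\chi)|_{h=\mathrm{id}_H}$ does not depend on $\chi$. *)

theory Defs
  imports "HOL-Analysis.Analysis"
begin

definition skew :: "real^3 \<Rightarrow> real^3^3" where
  "skew \<theta> = vector [vector [0, - \<theta>$3, \<theta>$2],
                     vector [\<theta>$3, 0, - \<theta>$1],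
                     vector [- \<theta>$2, \<theta>$1, 0]]"

primrec mpow :: "real^3^3 \<Rightarrow> nat \<Rightarrow> real^3^3" where
  "mpow A 0 = mat 1"
| "mpow A (Suc n) = A ** mpow A n"

definition Gamma :: "nat \<Rightarrow> real^3 \<Rightarrow> real^3^3" where
  "Gamma m \<theta> = (\<Sum>n. (1 / fact (m + n)) *\<^sub>R mpow (skew \<theta>) n)"

definition is_rot :: "real^3^3 \<Rightarrow> bool" where
  "is_rot R \<longleftrightarrow> transpose R ** R = mat 1 \<and> det R = 1"

(* InGVIO state: 'm indexes cloned camera poses, 'f indexes landmarks *)
record ('m::finite, 'f::finite) ingvio_state =
  Ri  :: "real^3^3"
  p_i :: "real^3"
  vi  :: "real^3"
  bg  :: "real^3"
  ba  :: "real^3"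
  Rc  :: "real^3^3"
  pc  :: "real^3"
  Rcm :: "(real^3^3)^'m"
  pcm :: "(real^3)^'m"
  pf  :: "(real^3)^'f"
  talpha :: real             (* clock bias *)
  fdrift :: real             (* clock drift *)

(* error vector (a real normed vector space):
   (dtheta_i, dp_i, dv_i, dbg, dba, dtheta_c, dp_c, dtheta_cm, dp_cm, dp_f, dt_alpha, df) *)
type_synonym ('m, 'f) ingvio_err =
  "(real^3) \<times> (real^3) \<times> (real^3) \<times> (real^3) \<times> (real^3) \<times> (real^3) \<times> (real^3) \<times>
   ((real^3)^'m) \<times> ((real^3)^'m) \<times> ((real^3)^'f) \<times> real \<times> real"

definition valid_state :: "('m::finite, 'f::finite) ingvio_state \<Rightarrow> bool" where
  "valid_state x \<longleftrightarrow> is_rot (Ri x) \<and> is_rot (Rc x) \<and> (\<forall>m. is_rot (Rcm x $ m))"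

(* the boxplus map; anchor j = index of the cloned pose to which landmark j is anchored *)
definition boxplus ::
  "('f \<Rightarrow> 'm) \<Rightarrow> ('m::finite, 'f::finite) ingvio_state \<Rightarrow> ('m, 'f) ingvio_err \<Rightarrow> ('m, 'f) ingvio_state" where
  "boxplus anchor x d = (case d of
     (dthi, dpi, dvi, dbg, dba, dthc, dpc, dthcm, dpcm, dpf, dta, df) \<Rightarrow>
     \<lparr> Ri = Gamma 0 dthi ** Ri x,
       p_i = Gamma 0 dthi *v p_i x + Gamma 1 dthi *v dpi,
       vi = Gamma 0 dthi *v vi x + Gamma 1 dthi *v dvi,
       bg = bg x + dbg,
       ba = ba x + dba,
       Rc = Gamma 0 dthc ** Rc x,
       pc = Gamma 0 dthc *v pc x + Gamma 1 dthc *v dpc,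
       Rcm = (\<chi> m. Gamma 0 (dthcm $ m) ** (Rcm x $ m)),
       pcm = (\<chi> m. Gamma 0 (dthcm $ m) *v (pcm x $ m) + Gamma 1 (dthcm $ m) *v (dpcm $ m)),
       pf = (\<chi> j. Gamma 0 (dthcm $ anchor j) *v (pf x $ j) + Gamma 1 (dthcm $ anchor j) *v (dpf $ j)),
       talpha = talpha x + dta,
       fdrift = fdrift x + df \<rparr>)"

definition nullNg :: "(nat \<Rightarrow> real^3) \<Rightarrow> nat \<Rightarrow> real^3^3 \<Rightarrow> (real^3) set" where
  "nullNg n N Recef = {v. \<forall>j\<in>{2..N}. (n j - n (j - 1)) \<bullet> (Recef *v v) = 0}"

(* element of SO_g(2) x| R^3 parametrised by rotation angle a about g and translation pS;
   R_S = Gamma_0(a * g/|g|) *)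
definition rotS :: "real^3 \<Rightarrow> real \<Rightarrow> real^3^3" where
  "rotS g a = Gamma 0 (a *\<^sub>R ((1 / norm g) *\<^sub>R g))"

definition act ::
  "real^3 \<Rightarrow> real \<times> (real^3) \<Rightarrow> ('m::finite, 'f::finite) ingvio_state \<Rightarrow> ('m, 'f) ingvio_state" where
  "act g h x = (case h of (a, pS) \<Rightarrow>
     (let RSi = matrix_inv (rotS g a) in
      x \<lparr> Ri := RSi ** Ri x,
          p_i := RSi *v (p_i x - pS),
          vi := RSi *v vi x,
          Rcm := (\<chi> m. RSi ** (Rcm x $ m)),
          pcm := (\<chi> m. RSi *v (pcm x $ m - pS)),
          pf := (\<chi> j. RSi *v (pf x $ j - pS)) \<rparr>))"

end

theory Submission
  imports Defs
begin

lemma matrix_inv_eq: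
  fixes A B :: "real^3^3"
  assumes "A ** B = mat 1" "B ** A = mat 1"
  shows "matrix_inv A = B"
proof -
  have "\<exists>A'. A ** A' = mat 1 \<and> A' ** A = mat 1" using assms by blast
  then have h: "A ** matrix_inv A = mat 1 \<and> matrix_inv A ** A = mat 1"
    unfolding matrix_inv_def by (rule someI_ex)
  have "matrix_inv A = (B ** A) ** matrix_inv A" using assms by simp
  also have "\<dots> = B" using h by (metis matrix_mul_assoc matrix_mul_rid)
  finally show ?thesis .
qed

lemma skew_scale: "skew (c *\<^sub>R u) = c *\<^sub>R skew u"
  by (simp add: skew_def vec_eq_iff forall_3 vector_3)

lemma mpow_scale: "mpow (c *\<^sub>R A) n = (c^n) *\<^sub>R mpow A n"
  by (induction n) (auto simp: matrix_scalar_ac scalar_matrix_assoc[symmetric])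

lemma skew_cube:
  assumes "norm u = 1"
  shows "skew u ** (skew u ** skew u) = - skew u"
proof -
  have "norm u ^ 2 = u \<bullet> u" by (simp add: power2_norm_eq_inner)
  then have n: "u$1 * u$1 + u$2 * u$2 + u$3 * u$3 = 1"
    using assms by (simp add: inner_vec_def sum_3)
  show ?thesis
    apply (simp add: skew_def vec_eq_iff forall_3 vector_3 matrix_matrix_mult_def sum_3)
    using n by algebra
qed


lemma matrix_add_rdistrib: "((B + C) ** A) = (B ** A) + (C ** A)"
  by (vector matrix_matrix_mult_def sum.distrib[symmetric] field_simps)

lemma mscal_right: "(A::real^3^3) ** (c *\<^sub>R B) = c *\<^sub>R (A ** B)"
  by (simp add: matrix_scalar_ac scalar_matrix_assoc)
lemma mscal_left: "(c *\<^sub>R A) ** (B::real^3^3) = c *\<^sub>R (A ** B)"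
  by (simp add: scalar_matrix_assoc)
lemma mneg_right: "(A::real^3^3) ** (- B) = - (A ** B)"
  by (metis mscal_right scaleR_minus1_left)

definition PK :: "real^3^3 \<Rightarrow> real \<Rightarrow> real \<Rightarrow> real \<Rightarrow> real^3^3" where
  "PK K p0 p1 p2 = p0 *\<^sub>R mat 1 + p1 *\<^sub>R K + p2 *\<^sub>R (K ** K)"

lemma PK_mult:
  assumes K3: "K ** (K ** K) = - K"
  shows "PK K p0 p1 p2 ** PK K q0 q1 q2 =
    PK K (p0*q0) (p0*q1 + p1*q0 - p1*q2 - p2*q1) (p0*q2 + p2*q0 + p1*q1 - p2*q2)"
proof -
  have K3': "(K ** K) ** K = - K" using K3 by (simp add: matrix_mul_assoc)
  have K4: "(K ** K) ** (K ** K) = - (K ** K)"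
    by (metis K3' matrix_mul_assoc matrix_scalar_ac scalar_matrix_assoc scaleR_minus1_left)
  have neg: "\<And>A B::real^3^3. A ** (- B) = - (A ** B)"
    by (metis matrix_scalar_ac scalar_matrix_assoc scaleR_minus1_left matrix_mul_rid)
  show ?thesis
    unfolding PK_def
    by (simp add: matrix_add_ldistrib matrix_add_rdistrib matrix_scalar_ac
        scalar_matrix_assoc[symmetric] K3 K3' K4 neg algebra_simps scaleR_left_distrib
        scaleR_left_diff_distrib)
qed


lemma mpow_K:
  assumes K3: "K ** (K ** K) = - K"
  shows "mpow K (Suc (2*k)) = ((-1)^k) *\<^sub>R K \<and> mpow K (Suc (Suc (2*k))) = ((-1)^k) *\<^sub>R (K ** K)"
proof (induction k)
  case 0
  then show ?case by simp
next
  case (Suc k)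
  have neg: "\<And>A B::real^3^3. A ** (- B) = - (A ** B)"
    by (metis matrix_scalar_ac scalar_matrix_assoc scaleR_minus1_left matrix_mul_rid)
  have e1: "Suc (2 * Suc k) = Suc (Suc (Suc (2*k)))" by simp
  have e2: "Suc (Suc (2 * Suc k)) = Suc (Suc (Suc (Suc (2*k))))" by simp
  have a: "mpow K (Suc (2 * Suc k)) = ((-1)^Suc k) *\<^sub>R K"
    unfolding e1 using Suc.IH by (simp add: mscal_right K3)
  have b: "mpow K (Suc (Suc (2 * Suc k))) = ((-1)^Suc k) *\<^sub>R (K ** K)"
    unfolding e2 using a e1 by (simp add: mscal_right mneg_right)
  show ?case using a b by simp
qed

definition cb :: "nat \<Rightarrow> nat \<Rightarrow> real" where
  "cb m n = (if odd n then (-1)^((n-1) div 2) / fact (m+n) else 0)"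
definition cg :: "nat \<Rightarrow> nat \<Rightarrow> real" where
  "cg m n = (if even n \<and> n \<noteq> 0 then - ((-1)^(n div 2)) / fact (m+n) else 0)"
definition c1 :: "nat \<Rightarrow> real \<Rightarrow> real" where "c1 m b = (\<Sum>n. cb m n * b^n)"
definition c2 :: "nat \<Rightarrow> real \<Rightarrow> real" where "c2 m b = (\<Sum>n. cg m n * b^n)"

lemma fact_le_inv: "inverse (fact (m+n) :: real) \<le> inverse (fact n)"
  by (simp add: fact_mono le_imp_inverse_le)

lemma summable_cb: "summable (\<lambda>n. cb m n * b^n)"
proof (rule summable_comparison_test)
  show "summable (\<lambda>n. inverse (fact n) * \<bar>b\<bar>^n)" by (rule summable_exp)
  show "\<exists>N. \<forall>n\<ge>N. norm (cb m n * b ^ n) \<le> inverse (fact n) * \<bar>b\<bar>^n"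
    using fact_le_inv[of m]
    by (auto simp: cb_def abs_mult power_abs divide_inverse intro!: mult_right_mono)
qed

lemma summable_cg: "summable (\<lambda>n. cg m n * b^n)"
proof (rule summable_comparison_test)
  show "summable (\<lambda>n. inverse (fact n) * \<bar>b\<bar>^n)" by (rule summable_exp)
  show "\<exists>N. \<forall>n\<ge>N. norm (cg m n * b ^ n) \<le> inverse (fact n) * \<bar>b\<bar>^n"
    using fact_le_inv[of m]
    by (auto simp: cg_def abs_mult power_abs divide_inverse intro!: mult_right_mono)
qed

lemma Gamma_closed:
  assumes u: "norm u = 1"
  shows "Gamma m (b *\<^sub>R u) = PK (skew u) (1 / fact m) (c1 m b) (c2 m b)"
proof -
  let ?K = "skew u"
  have K3: "?K ** (?K ** ?K) = - ?K" by (rule skew_cube[OF u])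
  have trm: "(1 / fact (m+n)) *\<^sub>R mpow (skew (b *\<^sub>R u)) n =
      (if n = 0 then 1 / fact m else 0) *\<^sub>R mat 1 + (cb m n * b^n) *\<^sub>R ?K + (cg m n * b^n) *\<^sub>R (?K ** ?K)"
    for n
  proof -
    have mp: "mpow (skew (b *\<^sub>R u)) n = b^n *\<^sub>R mpow ?K n"
      by (simp only: skew_scale mpow_scale)
    have "n = 0 \<or> (\<exists>k. n = Suc (2*k)) \<or> (\<exists>k. n = Suc (Suc (2*k)))" by presburger
    then consider "n = 0" | k where "n = Suc (2*k)" | k where "n = Suc (Suc (2*k))"
      by blast
    then show ?thesis
    proof cases
      case 1 then show ?thesis by (simp add: cb_def cg_def)
    next
      case (2 k)
      then show ?thesis using mpow_K[OF K3, of k] mp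
        by (simp del: mpow.simps add: cb_def cg_def)
    next
      case (3 k)
      have "odd k \<or> even k" by auto
      then show ?thesis using 3 mpow_K[OF K3, of k] mp
        by (auto simp del: mpow.simps simp: cb_def cg_def)
    qed
  qed
  have s: "(\<lambda>n. (if n = 0 then 1 / fact m else 0) *\<^sub>R mat 1 + (cb m n * b^n) *\<^sub>R ?K + (cg m n * b^n) *\<^sub>R (?K ** ?K))
      sums ((1 / fact m) *\<^sub>R mat 1 + c1 m b *\<^sub>R ?K + c2 m b *\<^sub>R (?K ** ?K))"
    unfolding c1_def c2_def
    apply (intro sums_add sums_scaleR_left summable_sums summable_cb summable_cg)
    using sums_single[of 0 "\<lambda>_. 1 / fact m :: real"] by simp
  show ?thesis unfolding Gamma_def PK_def trm using sums_unique[OF s] by simp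
qed


lemma c1_0: "c1 0 b = sin b"
proof -
  have "cb 0 = sin_coeff" by (auto simp: cb_def sin_coeff_def fun_eq_iff)
  then show ?thesis using sin_converges[of b] by (simp add: c1_def sums_iff)
qed

lemma c2_0: "c2 0 b = 1 - cos b"
proof -
  have e: "cg 0 n * b^n = (if n = 0 then 1 else 0) - cos_coeff n * b^n" for n
    by (auto simp: cg_def cos_coeff_def)
  have "(\<lambda>n. (if n = 0 then 1 else 0) - cos_coeff n * b^n) sums (1 - cos b)"
    using sums_diff[OF sums_single[of 0 "\<lambda>_. 1::real"] cos_converges[of b]] by simp
  then show ?thesis unfolding c2_def e by (simp add: sums_iff)
qed

lemma isCont_c1: "isCont (c1 m) z"
  unfolding c1_def
  by (rule isCont_powser[where K="\<bar>z\<bar> + 1"]) (auto intro: summable_cb)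

lemma isCont_c2: "isCont (c2 m) z"
  unfolding c2_def
  by (rule isCont_powser[where K="\<bar>z\<bar> + 1"]) (auto intro: summable_cg)

lemma c1_zero: "c1 m 0 = 0" by (simp add: c1_def cb_def)
lemma c2_zero: "c2 m 0 = 0" by (simp add: c2_def cg_def)

lemma PK_one: "PK K 1 0 0 = mat 1" by (simp add: PK_def)

lemma mv_neg: "(A::real^3^3) *v (- v) = - (A *v v)"
  by (metis matrix_vector_mult_scaleR scaleR_minus1_left)

lemma PK_id: "c = 1 \<Longrightarrow> A = 0 \<Longrightarrow> B = 0 \<Longrightarrow> PK K c A B = mat 1" by (simp add: PK_def)

lemma PK_vec: "PK K p0 p1 p2 *v v = p0 *\<^sub>R v + p1 *\<^sub>R (K *v v) + p2 *\<^sub>R ((K ** K) *v v)"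
  by (simp add: PK_def matrix_vector_mult_add_rdistrib flip: scaleR_matrix_vector_assoc)

lemma zero_deriv:
  fixes e :: "real \<Rightarrow> real" and L :: "real^3 \<Rightarrow> real^3"
  assumes "isCont e 0" "e 0 = 0" "bounded_linear L"
  shows "((\<lambda>h::real \<times> (real^3). e (fst h) *\<^sub>R L (snd h)) has_derivative (\<lambda>_. 0)) (at (0,0))"
proof -
  obtain C where C: "C > 0" "\<And>v. norm (L v) \<le> norm v * C"
    using bounded_linear.pos_bounded[OF assms(3)] by blast
  have lim: "((\<lambda>y::real \<times> (real^3). \<bar>e (fst y)\<bar> * C) \<longlongrightarrow> 0) (at (0,0))"
  proof -
    have "((\<lambda>y::real \<times> (real^3). fst y) \<longlongrightarrow> fst (0::real, 0::real^3)) (at (0,0))"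
      by (intro tendsto_fst tendsto_ident_at)
    then have "((\<lambda>y::real \<times> (real^3). e (fst y)) \<longlongrightarrow> e 0) (at (0,0))"
      using isCont_tendsto_compose[OF assms(1)] by simp
    then have "((\<lambda>y::real \<times> (real^3). \<bar>e (fst y)\<bar> * C) \<longlongrightarrow> \<bar>e 0\<bar> * C) (at (0,0))"
      by (intro tendsto_intros)
    then show ?thesis using assms(2) by simp
  qed
  have bd: "norm (norm (e (fst y) *\<^sub>R L (snd y) - e (fst (0::real, 0::real^3)) *\<^sub>R L (snd (0::real, 0::real^3)) - 0) / norm (y - (0, 0)))
      \<le> \<bar>e (fst y)\<bar> * C" for y :: "real \<times> (real^3)"
  proof (cases "y = 0")
    case True then show ?thesis using C by simp
  next
    case False
    then have ny: "norm y > 0" by simp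
    have "norm (L (snd y)) \<le> norm y * C"
      using C(2)[of "snd y"] norm_snd_le[of "snd y" "fst y"] C(1)
      by (metis prod.collapse mult_right_mono less_imp_le order_trans)
    then have "\<bar>e (fst y)\<bar> * norm (L (snd y)) \<le> \<bar>e (fst y)\<bar> * (norm y * C)"
      by (simp add: mult_left_mono)
    moreover have z: "(0::real, 0::real^3) = 0" by (simp add: zero_prod_def)
    ultimately show ?thesis using ny assms(2)
      by (simp add: divide_le_eq mult_ac z)
  qed
  show ?thesis
    unfolding has_derivative_iff_norm
    apply (intro conjI bounded_linear_zero)
    apply (rule Lim_null_comparison[OF _ lim])
    using bd by (intro always_eventually) blast
qed


lemma inv_coeffs0:
  fixes x y D :: real
  assumes "D \<noteq> 0" "D = (1 - y)^2 + x^2"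
  shows "1 * (- x / D) + x * 1 - x * ((x^2 - (1 - y) * y) / D) - y * (- x / D) = 0"
    and "1 * ((x^2 - (1 - y) * y) / D) + y * 1 + x * (- x / D) - y * ((x^2 - (1 - y) * y) / D) = 0"
proof -
  have n1: "- x + x * D - x * (x^2 - (1 - y) * y) + y * x = 0" unfolding assms(2)
    by (simp add: algebra_simps power2_eq_square)
  have "(1 * (- x / D) + x * 1 - x * ((x^2 - (1 - y) * y) / D) - y * (- x / D)) * D
     = - x + x * D - x * (x^2 - (1 - y) * y) + y * x"
    using assms(1) by (simp add: algebra_simps divide_simps)
  then show "1 * (- x / D) + x * 1 - x * ((x^2 - (1 - y) * y) / D) - y * (- x / D) = 0"
    using assms(1) n1 by simp
  have n2: "(x^2 - (1 - y) * y) + y * D - x * x - y * (x^2 - (1 - y) * y) = 0" unfolding assms(2)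
    by (simp add: algebra_simps power2_eq_square)
  have "(1 * ((x^2 - (1 - y) * y) / D) + y * 1 + x * (- x / D) - y * ((x^2 - (1 - y) * y) / D)) * D
     = (x^2 - (1 - y) * y) + y * D - x * x - y * (x^2 - (1 - y) * y)"
    using assms(1) by (simp add: algebra_simps divide_simps)
  then show "1 * ((x^2 - (1 - y) * y) / D) + y * 1 + x * (- x / D) - y * ((x^2 - (1 - y) * y) / D) = 0"
    using assms(1) n2 by simp
qed

lemmas inv_coeffs = inv_coeffs0[OF _ refl]

theorem proposition3:
  fixes anchor :: "'f::finite \<Rightarrow> 'm::finite"
    and boxminus :: "('m, 'f) ingvio_state \<Rightarrow> ('m, 'f) ingvio_state \<Rightarrow> ('m, 'f) ingvio_err"
    and g :: "real^3" and nsat :: "nat \<Rightarrow> real^3" and N :: nat and Recef :: "real^3^3"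
  assumes g_nz: "g \<noteq> 0"
    and unit_n: "\<forall>j\<in>{1..N}. norm (nsat j) = 1"
    and Recef_rot: "is_rot Recef"
    and inverse: "\<exists>e>0. \<forall>xh d. valid_state xh \<and> norm d < e \<longrightarrow>
                      boxminus (boxplus anchor xh d) xh = d"
  shows "(\<exists>D. \<forall>x. valid_state x \<longrightarrow>
            ((\<lambda>h. boxminus (act g h x) x) has_derivative D)
              (at (0, 0) within (UNIV \<times> nullNg nsat N Recef)))
       \<and> (\<exists>D. \<forall>x. valid_state x \<longrightarrow>
            ((\<lambda>t. boxminus (act g (0, t) x) x) has_derivative D)
              (at 0 within nullNg nsat N Recef))"
proof -
  define u where "u = (1 / norm g) *\<^sub>R g"
  have u1: "norm u = 1" using g_nz by (simp add: u_def)
  define K where "K = skew u"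
  have K3: "K ** (K ** K) = - K" unfolding K_def by (rule skew_cube[OF u1])
  have G0: "Gamma 0 (b *\<^sub>R u) = PK K 1 (sin b) (1 - cos b)" for b
    using Gamma_closed[OF u1, of 0 b] by (simp add: K_def c1_0 c2_0)
  have G1: "Gamma 1 (b *\<^sub>R u) = PK K 1 (c1 1 b) (c2 1 b)" for b
    using Gamma_closed[OF u1, of 1 b] by (simp add: K_def)
  have G00: "Gamma 0 0 = mat 1" using G0[of 0] by (simp add: PK_one)
  define Dn where "Dn b = (1 - c2 1 b)^2 + (c1 1 b)^2" for b
  define xi where "xi b = - c1 1 b / Dn b" for b
  define yi where "yi b = ((c1 1 b)^2 - (1 - c2 1 b) * c2 1 b) / Dn b" for b
  define NN where "NN b = PK K 1 (xi b) (yi b)" for b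
  have G1N: "Gamma 1 (b *\<^sub>R u) ** NN b = mat 1" if "Dn b \<noteq> 0" for b
  proof -
    have "Gamma 1 (b *\<^sub>R u) ** NN b = PK K 1 0 0"
      unfolding G1 NN_def PK_mult[OF K3] xi_def yi_def
      using inv_coeffs0[where x="c1 1 b" and y="c2 1 b" and D="Dn b", OF that Dn_def]
      by simp
    then show ?thesis by (simp add: PK_one)
  qed
  have RSi: "matrix_inv (rotS g a) = Gamma 0 ((-a) *\<^sub>R u)" for a
  proof -
    have r: "rotS g a = Gamma 0 (a *\<^sub>R u)" by (simp add: rotS_def u_def)
    have s: "sin a ^ 2 + cos a ^ 2 = 1" by simp
    have e1: "1 * 1 * (1 - cos a) + (1 - cos a) * 1 + sin a * - sin a - (1 - cos a) * (1 - cos a) = 0"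
      using s by (simp add: algebra_simps power2_eq_square)
    have e2: "1 * 1 * (1 - cos a) + (1 - cos a) * 1 + - sin a * sin a - (1 - cos a) * (1 - cos a) = 0"
      using s by (simp add: algebra_simps power2_eq_square)
    show ?thesis unfolding r
      apply (rule matrix_inv_eq)
      apply (simp only: G0 PK_mult[OF K3] sin_minus cos_minus, rule PK_id, simp,
             simp add: algebra_simps, use s in \<open>simp add: algebra_simps power2_eq_square\<close>)+
      done
  qed
  define M where "M a = NN (-a) ** Gamma 0 ((-a) *\<^sub>R u)" for a
  define w where "w h = - (M (fst h) *v snd h)" for h :: "real \<times> (real^3)"
  define d :: "real \<times> (real^3) \<Rightarrow> ('m, 'f) ingvio_err" where
    "d h = ((- fst h) *\<^sub>R u, w h, 0, 0, 0, 0, 0, vec ((- fst h) *\<^sub>R u), vec (w h), vec (w h), 0, 0)" for h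
  define Dd :: "real \<times> (real^3) \<Rightarrow> ('m, 'f) ingvio_err" where
    "Dd h = ((- fst h) *\<^sub>R u, - snd h, 0, 0, 0, 0, 0, vec ((- fst h) *\<^sub>R u), vec (- snd h), vec (- snd h), 0, 0)" for h
  have key: "Gamma 1 ((- a) *\<^sub>R u) *v w (a, p) = - (Gamma 0 ((-a) *\<^sub>R u) *v p)"
    if "Dn (-a) \<noteq> 0" for a p
    using G1N[OF that] by (simp add: w_def M_def mv_neg matrix_vector_mul_assoc matrix_mul_assoc)
  have act_eq: "act g h x = boxplus anchor x (d h)" if "Dn (- fst h) \<noteq> 0" for x h
  proof -
    obtain a p where h: "h = (a, p)" by fastforce
    have k: "Gamma 1 ((- a) *\<^sub>R u) *v w (a, p) = - (Gamma 0 ((-a) *\<^sub>R u) *v p)"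
      using key that h by simp
    show ?thesis
      by (cases x) (simp add: act_def boxplus_def d_def h RSi G00 k[simplified] matrix_vector_mult_diff_distrib Let_def)
  qed
  define E1 where "E1 a = 1 * sin (-a) + xi (-a) * 1 - xi (-a) * (1 - cos (-a)) - yi (-a) * sin (-a)" for a
  define E2 where "E2 a = 1 * (1 - cos (-a)) + yi (-a) * 1 + xi (-a) * sin (-a) - yi (-a) * (1 - cos (-a))" for a
  have ME: "M a = PK K (1 * 1) (E1 a) (E2 a)" for a
    by (simp only: M_def NN_def G0 PK_mult[OF K3] E1_def E2_def)
  have w_eq: "w = (\<lambda>h. - snd h - E1 (fst h) *\<^sub>R (K *v snd h) - E2 (fst h) *\<^sub>R ((K ** K) *v snd h))"
    by (rule ext) (simp add: w_def ME PK_vec)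
  have cc1: "isCont (\<lambda>a. c1 1 (-a)) z" for z by (rule isCont_o2[OF _ isCont_c1]) (intro continuous_intros)
  have cc2: "isCont (\<lambda>a. c2 1 (-a)) z" for z by (rule isCont_o2[OF _ isCont_c2]) (intro continuous_intros)
  have Dn0: "Dn 0 = 1" by (simp add: Dn_def c1_zero c2_zero)
  have cD: "isCont (\<lambda>a. Dn (-a)) 0" unfolding Dn_def by (intro continuous_intros cc1 cc2)
  have cE1: "isCont E1 0" unfolding E1_def xi_def yi_def
    by (intro continuous_intros cc1 cc2 cD) (simp_all add: Dn0)
  have cE2: "isCont E2 0" unfolding E2_def xi_def yi_def
    by (intro continuous_intros cc1 cc2 cD) (simp_all add: Dn0)
  have E10: "E1 0 = 0" by (simp add: E1_def xi_def yi_def c1_zero c2_zero)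
  have E20: "E2 0 = 0" by (simp add: E2_def xi_def yi_def c1_zero c2_zero)
  have blK: "bounded_linear (\<lambda>v. A *v v)" for A :: "real^3^3"
    by (simp add: linear_conv_bounded_linear[symmetric])
  have dw: "(w has_derivative (\<lambda>h. - snd h)) (at (0,0))"
    unfolding w_eq
    apply (rule has_derivative_eq_rhs)
     apply (rule has_derivative_diff[OF has_derivative_diff[OF has_derivative_minus[OF has_derivative_snd[OF has_derivative_ident]]]])
      apply (rule zero_deriv[OF cE1 E10 blK])
     apply (rule zero_deriv[OF cE2 E20 blK])
    by simp
  have dA: "((\<lambda>h::real \<times> (real^3). (- fst h) *\<^sub>R u) has_derivative (\<lambda>h. (- fst h) *\<^sub>R u)) (at (0,0))"
    by (intro has_derivative_scaleR_left has_derivative_minus has_derivative_fst has_derivative_ident)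
  have bvec: "bounded_linear (vec :: real^3 \<Rightarrow> (real^3)^'m)"
    by (simp add: linear_conv_bounded_linear[symmetric])
  have bvec': "bounded_linear (vec :: real^3 \<Rightarrow> (real^3)^'f)"
    by (simp add: linear_conv_bounded_linear[symmetric])
  have dd: "(d has_derivative Dd) (at (0,0))"
    unfolding d_def[abs_def] Dd_def[abs_def]
    by (intro has_derivative_Pair dA dw has_derivative_const
        bounded_linear.has_derivative[OF bvec] bounded_linear.has_derivative[OF bvec'])
  obtain e where e: "e > 0" "\<And>xh dd. valid_state xh \<Longrightarrow> norm dd < e \<Longrightarrow> boxminus (boxplus anchor xh dd) xh = dd"
    using inverse by blast
  have d0: "d (0,0) = 0" by (simp add: d_def w_def zero_prod_def)
  have ev1: "eventually (\<lambda>h. norm (d h) < e) (at (0,0))"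
  proof -
    have "(d \<longlongrightarrow> d (0,0)) (at (0,0))"
      using has_derivative_continuous[OF dd] by (simp add: continuous_at)
    then have "((\<lambda>h. norm (d h)) \<longlongrightarrow> 0) (at (0,0))" using d0 tendsto_norm by fastforce
    then show ?thesis using e(1) by (rule order_tendstoD(2))
  qed
  have ev2: "eventually (\<lambda>h::real \<times> (real^3). Dn (- fst h) > 0) (at (0,0))"
  proof -
    have "((\<lambda>h::real \<times> (real^3). fst h) \<longlongrightarrow> fst (0::real, 0::real^3)) (at (0,0))"
      by (intro tendsto_fst tendsto_ident_at)
    then have "((\<lambda>h::real \<times> (real^3). Dn (- fst h)) \<longlongrightarrow> Dn (- 0)) (at (0,0))"
      using isCont_tendsto_compose[OF cD] by simp
    then show ?thesis using Dn0 by (intro order_tendstoD(1)) auto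
  qed
  have main: "((\<lambda>h. boxminus (act g h x) x) has_derivative Dd) (at (0,0))" if vx: "valid_state x" for x
  proof (rule has_derivative_transform_eventually[OF dd])
    show "\<forall>\<^sub>F h in at (0,0). d h = boxminus (act g h x) x"
      using ev1 ev2
    proof eventually_elim
      case (elim h)
      then show ?case using act_eq[of h x] e(2)[OF vx] by simp
    qed
    show "d (0,0) = boxminus (act g (0,0) x) x"
      using act_eq[of "(0,0)" x] e(2)[OF vx, of "d (0,0)"] d0 e(1) Dn0 by simp
  qed simp
  have pt: "((\<lambda>t::real^3. (0::real, t)) has_derivative (\<lambda>t. (0, t))) (at 0 within nullNg nsat N Recef)"
    by (intro has_derivative_Pair has_derivative_const has_derivative_ident)
  show ?thesis
  proof (intro conjI exI allI impI)
    fix x :: "('m, 'f) ingvio_state" assume "valid_state x"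
    then show "((\<lambda>h. boxminus (act g h x) x) has_derivative Dd) (at (0, 0) within UNIV \<times> nullNg nsat N Recef)"
      using main has_derivative_at_withinI by blast
  next
    fix x :: "('m, 'f) ingvio_state" assume "valid_state x"
    then show "((\<lambda>t. boxminus (act g (0, t) x) x) has_derivative (\<lambda>t. Dd (0, t))) (at 0 within nullNg nsat N Recef)"
      using has_derivative_compose[OF pt, of "\<lambda>h. boxminus (act g h x) x" Dd] main by simp
  qed
qed

end
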